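(* Let $(X,d)$ be a complete CAT(0) space and let $(A,B)$ be a pair of nonempty, closed, convex, bounded subsets of $X$ which is proximal. Let $T:A\cup B\to A\cup B$ be a noncyclic relatively nonexpansive mapping. Then $T$ is nonexpansive, i.e., $d(Tx,Ty)\le d(x,y)$ for all $x,y\in A\cup B$.
   Context: A CAT(0) space is a geodesic space in which every geodesic triangle satisfies $d(x,y)\le d_{\mathbb{E}^2}(\bar x,\bar y)$ for all points $x,y$ of the triangle and their comparison points in a Euclidean comparison triangle with the same side lengths. $\operatorname{dist}(A,B)=\inf\{d(x,y):x\in A,y\in B\}$. The pair $(A,B)$ is proximal if for every $(a,b)\in A\times B$ there is $(a',b')\in A\times B$ with $d(a,b')=d(a',b)=\operatorname{dist}(A,B)$. $T$ is relatively nonexpansive if $d(Tx,Ty)\le d(x,y)$ for all $x\in A$, $y\in B$, and noncyclic if $T(A)\subseteq A$, $T(B)\subseteq B$. *)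

theory Defs
  imports "HOL-Analysis.Analysis"
begin

definition geodesic_seg :: "(real \<Rightarrow> 'a::metric_space) \<Rightarrow> 'a \<Rightarrow> 'a \<Rightarrow> bool" where
  "geodesic_seg g x y \<longleftrightarrow> g 0 = x \<and> g 1 = y \<and>
     (\<forall>s\<in>{0..1}. \<forall>t\<in>{0..1}. dist (g s) (g t) = \<bar>s - t\<bar> * dist x y)"

definition geodesic_space :: "'a::metric_space itself \<Rightarrow> bool" where
  "geodesic_space _ \<longleftrightarrow> (\<forall>x y::'a. \<exists>g. geodesic_seg g x y)"

definition cat0_sides ::
  "(real \<Rightarrow> 'a::metric_space) \<Rightarrow> real^2 \<Rightarrow> real^2 \<Rightarrow> (real \<Rightarrow> 'a) \<Rightarrow> real^2 \<Rightarrow> real^2 \<Rightarrow> bool" where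
  "cat0_sides g a b h c e \<longleftrightarrow>
     (\<forall>s\<in>{0..1}. \<forall>t\<in>{0..1}.
        dist (g s) (h t) \<le> dist ((1 - s) *\<^sub>R a + s *\<^sub>R b) ((1 - t) *\<^sub>R c + t *\<^sub>R e))"

definition CAT0_space :: "'a::metric_space itself \<Rightarrow> bool" where
  "CAT0_space TYPE('a) \<longleftrightarrow> geodesic_space TYPE('a) \<and>
     (\<forall>(x::'a) y z g1 g2 g3 (xb::real^2) yb zb.
        geodesic_seg g1 x y \<and> geodesic_seg g2 y z \<and> geodesic_seg g3 z x \<and>
        dist xb yb = dist x y \<and> dist yb zb = dist y z \<and> dist zb xb = dist z x \<longrightarrow>
        (\<forall>(g, a, b)\<in>{(g1, xb, yb), (g2, yb, zb), (g3, zb, xb)}.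
         \<forall>(h, c, e)\<in>{(g1, xb, yb), (g2, yb, zb), (g3, zb, xb)}.
           cat0_sides g a b h c e))"

definition geod_convex :: "'a::metric_space set \<Rightarrow> bool" where
  "geod_convex C \<longleftrightarrow> (\<forall>x\<in>C. \<forall>y\<in>C. \<forall>g. geodesic_seg g x y \<longrightarrow> g ` {0..1} \<subseteq> C)"

definition proximal_pair :: "'a::metric_space set \<Rightarrow> 'a set \<Rightarrow> bool" where
  "proximal_pair A B \<longleftrightarrow> (\<forall>a\<in>A. \<forall>b\<in>B. \<exists>a'\<in>A. \<exists>b'\<in>B.
      dist a b' = setdist A B \<and> dist a' b = setdist A B)"

definition noncyclic :: "('a \<Rightarrow> 'a) \<Rightarrow> 'a set \<Rightarrow> 'a set \<Rightarrow> bool" where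
  "noncyclic T A B \<longleftrightarrow> T ` A \<subseteq> A \<and> T ` B \<subseteq> B"

definition rel_nonexpansive :: "('a::metric_space \<Rightarrow> 'a) \<Rightarrow> 'a set \<Rightarrow> 'a set \<Rightarrow> bool" where
  "rel_nonexpansive T A B \<longleftrightarrow> (\<forall>x\<in>A. \<forall>y\<in>B. dist (T x) (T y) \<le> dist x y)"

end

theory Submission
  imports Defs
begin

lemma orth_norm2:
  fixes u v :: real
  shows "norm (u *\<^sub>R (axis 1 1 :: real^2) + v *\<^sub>R axis 2 1) ^ 2 = u^2 + v^2"
proof -
  have n: "(1::2) \<noteq> 2" by simp
  show ?thesis
    apply (simp only: power2_norm_eq_inner)
    apply (simp add: inner_add_left inner_add_right inner_axis_axis n power2_eq_square)
    done
qed

lemma tri_exists: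
  fixes a b c :: real
  assumes "0\<le>a" "0\<le>b" "0\<le>c" "a \<le> b + c" "b \<le> a + c" "c \<le> a + b"
  shows "\<exists>xb yb zb::real^2. dist xb yb = c \<and> dist yb zb = a \<and> dist zb xb = b"
proof -
  define e1 :: "real^2" where "e1 = axis 1 1"
  define e2 :: "real^2" where "e2 = axis 2 1"
  define p where "p = (b^2 + c^2 - a^2) / (2*c)"
  define q where "q = sqrt (b^2 - p^2)"
  have pb: "p^2 \<le> b^2"
  proof (cases "c = 0")
    case True then show ?thesis by (simp add: p_def)
  next
    case False
    then have cp: "c > 0" using assms by simp
    have h1: "(b - c)^2 \<le> a^2" 
    proof -
      have "\<bar>b - c\<bar>^2 \<le> a^2" using assms by (intro power_mono) auto
      then show ?thesis by simp
    qed
    have h2: "a^2 \<le> (b + c)^2" using assms by (intro power_mono) auto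
    have "\<bar>b^2 + c^2 - a^2\<bar> \<le> 2*b*c" using h1 h2 by (simp add: power2_eq_square algebra_simps abs_le_iff)
    then have "\<bar>p\<bar> \<le> b" using cp by (simp add: p_def abs_divide divide_le_eq mult.commute mult.left_commute)
    then show ?thesis using assms by (metis abs_le_square_iff abs_of_nonneg)
  qed
  have q2: "q^2 = b^2 - p^2" using pb by (simp add: q_def)
  define xb :: "real^2" where "xb = 0"
  define yb where "yb = c *\<^sub>R e1 + 0 *\<^sub>R e2"
  define zb where "zb = p *\<^sub>R e1 + q *\<^sub>R e2"
  have d1: "dist xb yb = c"
    using orth_norm2[of c 0] assms by (simp add: xb_def yb_def e1_def e2_def dist_norm)
  have "dist yb zb ^2 = (c - p)^2 + (0 - q)^2"
    unfolding dist_norm yb_def zb_def e1_def e2_def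
    by (subst orth_norm2[symmetric]) (simp add: algebra_simps)
  also have "\<dots> = a^2"
  proof (cases "c = 0")
    case True
    then have "a = b" using assms by simp
    then show ?thesis using True q2 by (simp add: p_def power2_eq_square)
  next
    case False
    then show ?thesis using q2 by (simp add: p_def power2_eq_square field_simps)
  qed
  finally have d2: "dist yb zb = a" using assms
    by (metis power2_eq_iff_nonneg zero_le_dist)
  have "dist zb xb ^2 = p^2 + q^2"
    unfolding dist_norm xb_def zb_def e1_def e2_def by (simp add: orth_norm2)
  then have "dist zb xb ^2 = b^2" using q2 by simp
  then have d3: "dist zb xb = b" using assms by (metis power2_eq_iff_nonneg zero_le_dist)
  show ?thesis using d1 d2 d3 by blast
qed

lemma euclid_id:
  fixes xb yb zb :: "'b::real_inner"
  shows "dist ((1 - t) *\<^sub>R yb + t *\<^sub>R zb) xb ^ 2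
     = (1-t) * dist yb xb ^2 + t * dist zb xb ^2 - t*(1-t) * dist yb zb ^2"
proof -
  have e: "(1 - t) *\<^sub>R yb + t *\<^sub>R zb - xb = (1-t) *\<^sub>R (yb - xb) + t *\<^sub>R (zb - xb)"
    by (simp add: algebra_simps)
  have e2: "yb - zb = (yb - xb) - (zb - xb)" by simp
  show ?thesis
    unfolding dist_norm e
    apply (subst e2)
    apply (simp add: power2_norm_eq_inner inner_add_left inner_add_right inner_diff_left inner_diff_right inner_commute)
    apply (simp add: algebra_simps power2_eq_square)
    done
qed


lemma CN:
  assumes cat: "CAT0_space TYPE('a::metric_space)"
    and g: "geodesic_seg g y z" and t: "t \<in> {0..1}"
  shows "dist (x::'a) (g t) ^ 2 \<le> (1-t) * dist x y ^2 + t * dist x z ^2 - t*(1-t) * dist y z ^2"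
proof -
  have gs: "geodesic_space TYPE('a)" and C: "\<forall>(x::'a) y z g1 g2 g3 (xb::real^2) yb zb.
        geodesic_seg g1 x y \<and> geodesic_seg g2 y z \<and> geodesic_seg g3 z x \<and>
        dist xb yb = dist x y \<and> dist yb zb = dist y z \<and> dist zb xb = dist z x \<longrightarrow>
        (\<forall>(g, a, b)\<in>{(g1, xb, yb), (g2, yb, zb), (g3, zb, xb)}.
         \<forall>(h, c, e)\<in>{(g1, xb, yb), (g2, yb, zb), (g3, zb, xb)}.
           cat0_sides g a b h c e)"
    using cat unfolding CAT0_space_def by auto
  obtain g1 where g1: "geodesic_seg g1 x y" using gs unfolding geodesic_space_def by blast
  obtain g3 where g3: "geodesic_seg g3 z x" using gs unfolding geodesic_space_def by blast
  obtain xb yb zb :: "real^2" where d: "dist xb yb = dist x y" "dist yb zb = dist y z" "dist zb xb = dist z x"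
    using tri_exists[of "dist y z" "dist z x" "dist x y"]
    by (metis dist_commute dist_triangle zero_le_dist add.commute)
  have "cat0_sides g yb zb g1 xb yb"
    using C[rule_format, OF conjI[OF g1 conjI[OF g conjI[OF g3 conjI[OF d(1) conjI[OF d(2) d(3)]]]]]]
    by auto
  then have "dist (g t) (g1 0) \<le> dist ((1 - t) *\<^sub>R yb + t *\<^sub>R zb) ((1 - 0) *\<^sub>R xb + 0 *\<^sub>R yb)"
    unfolding cat0_sides_def using t by (metis atLeastAtMost_iff order_refl zero_le_one)
  moreover have "g1 0 = x" using g1 by (simp add: geodesic_seg_def)
  ultimately have "dist x (g t) \<le> dist ((1 - t) *\<^sub>R yb + t *\<^sub>R zb) xb"
    by (simp add: dist_commute)
  then have "dist x (g t) ^ 2 \<le> dist ((1 - t) *\<^sub>R yb + t *\<^sub>R zb) xb ^ 2"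
    by (intro power_mono) auto
  also have "\<dots> = (1-t) * dist yb xb ^2 + t * dist zb xb ^2 - t*(1-t) * dist yb zb ^2"
    by (rule euclid_id)
  also have "\<dots> = (1-t) * dist x y ^2 + t * dist x z ^2 - t*(1-t) * dist y z ^2"
    using d by (simp add: dist_commute)
  finally show ?thesis .
qed

lemma lower:
  assumes cat: "CAT0_space TYPE('a::metric_space)"
    and cv: "geod_convex A" and p: "p \<in> A" and q: "(q::'a) \<in> A"
    and Dw: "\<forall>a\<in>A. D \<le> dist w a" and qw: "dist q w = D" and D0: "0 \<le> D"
  shows "dist p q ^ 2 + D ^ 2 \<le> dist p w ^ 2"
proof -
  have gs: "geodesic_space TYPE('a)" using cat unfolding CAT0_space_def by auto
  obtain g where g: "geodesic_seg g q p" using gs unfolding geodesic_space_def by blast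
  have gA: "g ` {0..1} \<subseteq> A" using cv p q g unfolding geod_convex_def by blast
  have key: "dist p q ^ 2 + D ^ 2 \<le> dist p w ^ 2 + t * dist p q ^ 2" if t: "0 < t" "t \<le> 1" for t
  proof -
    have "g t \<in> A" using gA t by auto
    then have "D \<le> dist w (g t)" using Dw by auto
    then have "D^2 \<le> dist w (g t) ^ 2" using D0 by (intro power_mono) auto
    also have "\<dots> \<le> (1-t) * dist w q ^2 + t * dist w p ^2 - t*(1-t) * dist q p ^2"
      using CN[OF cat g] t by auto
    finally have "t * D^2 \<le> t * (dist w p ^2 - (1-t) * dist q p ^2)"
      using qw by (simp add: dist_commute algebra_simps)
    then have "D^2 \<le> dist w p ^2 - (1-t) * dist q p ^2" using t by simp
    then show ?thesis by (simp add: dist_commute algebra_simps)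
  qed
  show ?thesis
  proof (rule field_le_epsilon)
    fix e :: real assume e: "0 < e"
    define t where "t = min 1 (e / (dist p q ^ 2 + 1))"
    have pos: "0 < e / (dist p q ^ 2 + 1)" using e by (simp add: add_nonneg_pos)
    have t0: "0 < t" "t \<le> 1" using pos by (auto simp: t_def)
    have "t * dist p q ^ 2 \<le> e / (dist p q ^ 2 + 1) * (dist p q ^ 2 + 1)"
      by (intro mult_mono) (auto simp: t_def e less_imp_le)
    also have "\<dots> = e"
    proof -
      have "0 < dist p q ^ 2 + 1" by (simp add: add_nonneg_pos)
      then show ?thesis by simp
    qed
    finally show "dist p q ^ 2 + D ^ 2 \<le> dist p w ^ 2 + e" using key[OF t0] by linarith
  qed
qed

lemma fourpt:
  assumes cat: "CAT0_space TYPE('a::metric_space)"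
  shows "dist (a::'a) c ^ 2 \<le> dist a b ^2 + dist a d ^2 + dist c b ^2 + dist c d ^2 - dist b d ^2"
proof -
  have gs: "geodesic_space TYPE('a)" using cat unfolding CAT0_space_def by auto
  obtain g where g: "geodesic_seg g b d" using gs unfolding geodesic_space_def by blast
  have h: "(1/2::real) \<in> {0..1}" by simp
  have 1: "dist a (g (1/2)) ^ 2 \<le> (1/2) * dist a b ^2 + (1/2) * dist a d ^2 - (1/4) * dist b d ^2"
    using CN[OF cat g h, of a] by simp
  have 2: "dist c (g (1/2)) ^ 2 \<le> (1/2) * dist c b ^2 + (1/2) * dist c d ^2 - (1/4) * dist b d ^2"
    using CN[OF cat g h, of c] by simp
  have "dist a c \<le> dist a (g (1/2)) + dist c (g (1/2))" by (metis dist_triangle dist_commute)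
  then have "dist a c ^ 2 \<le> (dist a (g (1/2)) + dist c (g (1/2)))^2" by (intro power_mono) auto
  also have "\<dots> \<le> 2 * dist a (g (1/2)) ^2 + 2 * dist c (g (1/2)) ^ 2"
  proof -
    have "(dist a (g (1/2)) + dist c (g (1/2)))^2 + (dist a (g (1/2)) - dist c (g (1/2)))^2
       = 2 * dist a (g (1/2)) ^2 + 2 * dist c (g (1/2)) ^ 2" by (simp add: power2_eq_square algebra_simps)
    moreover have "0 \<le> (dist a (g (1/2)) - dist c (g (1/2)))^2" by simp
    ultimately show ?thesis by linarith
  qed
  finally show ?thesis using 1 2 by linarith
qed

lemma sameside:
  fixes A B :: "'a::metric_space set" and T :: "'a \<Rightarrow> 'a"
  assumes cat: "CAT0_space TYPE('a)"
    and nA: "A \<noteq> {}" and nB: "B \<noteq> {}"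
    and cA: "geod_convex A" and cB: "geod_convex B"
    and prox: "\<forall>a\<in>A. \<exists>b'\<in>B. dist a b' = setdist A B"
    and proxB: "\<forall>b\<in>B. \<exists>a'\<in>A. dist a' b = setdist A B"
    and TA: "T ` A \<subseteq> A" and TB: "T ` B \<subseteq> B"
    and ne: "\<forall>x\<in>A. \<forall>y\<in>B. dist (T x) (T y) \<le> dist x y"
    and x: "x \<in> A" and y: "y \<in> A"
  shows "dist (T x) (T y) \<le> dist x y"
proof -
  define D where "D = setdist A B"
  have D0: "0 \<le> D" by (simp add: D_def setdist_pos_le)
  have DAB: "\<And>a b. a \<in> A \<Longrightarrow> b \<in> B \<Longrightarrow> D \<le> dist a b" by (simp add: D_def setdist_le_dist)
  obtain x' where x': "x' \<in> B" "dist x x' = D" using prox x D_def by blast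
  obtain y' where y': "y' \<in> B" "dist y y' = D" using prox y D_def by blast
  have Tx: "T x \<in> A" "T y \<in> A" "T x' \<in> B" "T y' \<in> B" using TA TB x y x' y' by auto
  have "dist (T y) (T y') \<le> D" using ne y y' by auto
  then have Tyy: "dist (T y) (T y') = D" using DAB Tx by (meson antisym)
  have L1: "dist (T x) (T y) ^ 2 + D^2 \<le> dist (T x) (T y') ^ 2"
    using lower[OF cat cA Tx(1) Tx(2), of D "T y'"] DAB Tx Tyy D0 by (auto simp: dist_commute)
  have L2: "dist x' y' ^ 2 + D^2 \<le> dist x' y ^ 2"
  proof -
    have "\<forall>a\<in>B. D \<le> dist y a" using DAB y by auto
    moreover have "dist y' y = D" using y' by (simp add: dist_commute)
    ultimately show ?thesis using lower[OF cat cB x'(1) y'(1), of D y] D0 by auto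
  qed
  have F: "dist x y' ^ 2 \<le> dist x y ^2 + dist x x' ^2 + dist y' y ^2 + dist y' x' ^2 - dist y x' ^2"
    using fourpt[OF cat, of x y' y x'] .
  have U: "dist x y' ^ 2 \<le> dist x y ^ 2 + D^2"
    using F L2 x' y' by (simp add: dist_commute)
  have "dist (T x) (T y') \<le> dist x y'" using ne x y' by auto
  then have "dist (T x) (T y') ^ 2 \<le> dist x y' ^ 2" by (intro power_mono) auto
  then have "dist (T x) (T y) ^ 2 \<le> dist x y ^ 2" using L1 U by linarith
  then show ?thesis by (simp add: power2_le_iff_abs_le)
qed

theorem mainTheorem10:
  fixes A B :: "'a::complete_space set" and T :: "'a \<Rightarrow> 'a"
  assumes "CAT0_space TYPE('a)"
    and "A \<noteq> {}" "B \<noteq> {}"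
    and "closed A" "closed B"
    and "geod_convex A" "geod_convex B"
    and "bounded A" "bounded B"
    and "proximal_pair A B"
    and "noncyclic T A B"
    and "rel_nonexpansive T A B"
  shows "\<forall>x\<in>A \<union> B. \<forall>y\<in>A \<union> B. dist (T x) (T y) \<le> dist x y"
proof -
  have prox: "\<forall>a\<in>A. \<exists>b'\<in>B. dist a b' = setdist A B"
    and proxB: "\<forall>b\<in>B. \<exists>a'\<in>A. dist a' b = setdist A B"
    using assms(2,3,10) unfolding proximal_pair_def by blast+
  have TA: "T ` A \<subseteq> A" and TB: "T ` B \<subseteq> B" using assms(11) unfolding noncyclic_def by auto
  have ne: "\<forall>x\<in>A. \<forall>y\<in>B. dist (T x) (T y) \<le> dist x y" using assms(12) unfolding rel_nonexpansive_def .
  have ne': "\<forall>x\<in>B. \<forall>y\<in>A. dist (T x) (T y) \<le> dist x y" using ne by (metis dist_commute)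
  have prox': "\<forall>a\<in>B. \<exists>b'\<in>A. dist a b' = setdist B A"
    using proxB by (metis dist_commute setdist_sym)
  have proxB': "\<forall>b\<in>A. \<exists>a'\<in>B. dist a' b = setdist B A"
    using prox by (metis dist_commute setdist_sym)
  show ?thesis
  proof (intro ballI)
    fix x y assume x: "x \<in> A \<union> B" and y: "y \<in> A \<union> B"
    show "dist (T x) (T y) \<le> dist x y"
    proof (cases "x \<in> A")
      case xA: True
      show ?thesis
      proof (cases "y \<in> A")
        case True then show ?thesis
          using sameside[OF assms(1,2,3,6,7) prox proxB TA TB ne xA] by blast
      next
        case False then show ?thesis using y ne xA by auto
      qed
    next
      case xB: False
      then have xB: "x \<in> B" using x by auto
      show ?thesis
      proof (cases "y \<in> B")
        case True then show ?thesis
          using sameside[OF assms(1,3,2,7,6) prox' proxB' TB TA ne' xB] by blast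
      next
        case False then show ?thesis using y ne' xB by auto
      qed
    qed
  qed
qed

end
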